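(* Let $A=\sum_{j=1}^nE_j$ where $n\in\mathbb N$ and $E_j$ are rank-one projections (not necessarily orthogonal), and let $\xi$ be a sequence with $0\le\xi_j\le1$ for all $j$ and $\sum_{j=1}^\infty\xi_j=\operatorname{tr}(A)$. Then $\xi\in\operatorname{Adm}(A)$.
   Context: $\operatorname{Adm}(A)$ is the set of sequences $\xi\in\ell^\infty_+$ such that $A=\sum_j\xi_jP_j$ for some rank-one projections $P_j$ (series converging in the strong operator topology if infinite). *)

theory Defs
  imports Complex_Main
begin

text \<open>The separable Hilbert space is modelled concretely as l2(N) of complex sequences.
  Operators are functions on sequences, only their behaviour on l2 matters.\<close>

definition l2 :: "(nat \<Rightarrow> complex) set" where
  "l2 = {x. summable (\<lambda>i. (cmod (x i))^2)}"

definition l2_inner :: "(nat \<Rightarrow> complex) \<Rightarrow> (nat \<Rightarrow> complex) \<Rightarrow> complex" where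
  "l2_inner x y = (\<Sum>i. x i * cnj (y i))"

definition l2_norm :: "(nat \<Rightarrow> complex) \<Rightarrow> real" where
  "l2_norm x = sqrt (\<Sum>i. (cmod (x i))^2)"

definition bounded_op :: "((nat \<Rightarrow> complex) \<Rightarrow> (nat \<Rightarrow> complex)) \<Rightarrow> bool" where
  "bounded_op T \<longleftrightarrow>
     (\<forall>x\<in>l2. T x \<in> l2) \<and>
     (\<forall>x\<in>l2. \<forall>y\<in>l2. \<forall>a b. T (\<lambda>i. a * x i + b * y i) = (\<lambda>i. a * T x i + b * T y i)) \<and>
     (\<exists>C. \<forall>x\<in>l2. l2_norm (T x) \<le> C * l2_norm x)"

definition rank_one_projection :: "((nat \<Rightarrow> complex) \<Rightarrow> (nat \<Rightarrow> complex)) \<Rightarrow> bool" where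
  "rank_one_projection P \<longleftrightarrow>
     bounded_op P \<and>
     (\<forall>x\<in>l2. P (P x) = P x) \<and>
     (\<forall>x\<in>l2. \<forall>y\<in>l2. l2_inner (P x) y = l2_inner x (P y)) \<and>
     (\<exists>v\<in>l2. v \<noteq> (\<lambda>_. 0) \<and> P ` l2 = {(\<lambda>i. c * v i) | c. True})"

definition std_basis :: "nat \<Rightarrow> (nat \<Rightarrow> complex)" where
  "std_basis k = (\<lambda>i. if i = k then 1 else 0)"

definition op_trace :: "((nat \<Rightarrow> complex) \<Rightarrow> (nat \<Rightarrow> complex)) \<Rightarrow> complex" where
  "op_trace T = (\<Sum>k. l2_inner (T (std_basis k)) (std_basis k))"

text \<open>Adm(A): sequences in l-infinity-plus with A = sum_j xi_j P_j, P_j rank-one projections,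
  the series converging in the strong operator topology.\<close>
definition Adm :: "((nat \<Rightarrow> complex) \<Rightarrow> (nat \<Rightarrow> complex)) \<Rightarrow> (nat \<Rightarrow> real) set" where
  "Adm A = {\<xi>. (\<forall>j. 0 \<le> \<xi> j) \<and> bdd_above (range \<xi>) \<and>
     (\<exists>P. (\<forall>j. rank_one_projection (P j)) \<and>
        (\<forall>x\<in>l2. (\<lambda>N. l2_norm (\<lambda>i. A x i - (\<Sum>j<N. complex_of_real (\<xi> j) * P j x i)))
                   \<longlonglongrightarrow> 0))}"

end

theory Submission
  imports Defs
begin

lemma cmod_mult_cnj_le: "cmod (a * cnj b) \<le> (cmod a)^2 + (cmod b)^2"
proof -
  have "2 * (cmod a * cmod b) \<le> (cmod a)^2 + (cmod b)^2"
    using sum_squares_bound[of "cmod a" "cmod b"] by (simp add: power2_eq_square)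
  moreover have "0 \<le> cmod a * cmod b" by simp
  ultimately have "cmod a * cmod b \<le> (cmod a)^2 + (cmod b)^2" by linarith
  thus ?thesis by (simp add: norm_mult)
qed

lemma l2_summable_sq: "x \<in> l2 \<Longrightarrow> summable (\<lambda>i. (cmod (x i))^2)"
  by (simp add: l2_def)

lemma summable_inner_norm:
  assumes "x \<in> l2" "y \<in> l2"
  shows "summable (\<lambda>i. cmod (x i * cnj (y i)))"
proof (rule summable_comparison_test[where g="\<lambda>i. (cmod (x i))^2 + (cmod (y i))^2"])
  show "\<exists>N. \<forall>n\<ge>N. norm (cmod (x n * cnj (y n))) \<le> (cmod (x n))\<^sup>2 + (cmod (y n))\<^sup>2"
    using cmod_mult_cnj_le by auto
  show "summable (\<lambda>i. (cmod (x i))\<^sup>2 + (cmod (y i))\<^sup>2)"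
    using assms by (intro summable_add) (auto simp: l2_def)
qed

lemma summable_inner:
  assumes "x \<in> l2" "y \<in> l2"
  shows "summable (\<lambda>i. x i * cnj (y i))"
  using summable_norm_cancel[OF summable_inner_norm[OF assms]] .

lemma cmod_add_sq_le: "(cmod (s + t))^2 \<le> 2 * (cmod s)^2 + 2 * (cmod t)^2"
proof -
  have "cmod (s+t) \<le> cmod s + cmod t" by (rule norm_triangle_ineq)
  hence "(cmod (s+t))^2 \<le> (cmod s + cmod t)^2" by (simp add: power_mono)
  also have "\<dots> \<le> 2 * (cmod s)^2 + 2 * (cmod t)^2"
    using sum_squares_bound[of "cmod s" "cmod t"] by (simp add: power2_eq_square algebra_simps)
  finally show ?thesis .
qed

lemma l2_lin:
  assumes "x \<in> l2" "y \<in> l2"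
  shows "(\<lambda>i. a * x i + b * y i) \<in> l2"
  unfolding l2_def
proof (simp, rule summable_comparison_test[where g="\<lambda>i. 2 * (cmod a)^2 * (cmod (x i))^2 + 2 * (cmod b)^2 * (cmod (y i))^2"])
  show "\<exists>N. \<forall>n\<ge>N. norm ((cmod (a * x n + b * y n))\<^sup>2) \<le> 2 * (cmod a)\<^sup>2 * (cmod (x n))\<^sup>2 + 2 * (cmod b)\<^sup>2 * (cmod (y n))\<^sup>2"
  proof (intro exI allI impI)
    fix n :: nat
    show "norm ((cmod (a * x n + b * y n))\<^sup>2) \<le> 2 * (cmod a)\<^sup>2 * (cmod (x n))\<^sup>2 + 2 * (cmod b)\<^sup>2 * (cmod (y n))\<^sup>2"
      using cmod_add_sq_le[of "a * x n" "b * y n"] by (simp add: norm_mult power_mult_distrib)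
  qed
  show "summable (\<lambda>i. 2 * (cmod a)\<^sup>2 * (cmod (x i))\<^sup>2 + 2 * (cmod b)\<^sup>2 * (cmod (y i))\<^sup>2)"
    using assms by (intro summable_add summable_mult) (auto simp: l2_def)
qed

lemma l2_scale: "x \<in> l2 \<Longrightarrow> (\<lambda>i. a * x i) \<in> l2"
  using l2_lin[of x x a 0] by simp

lemma inner_lin1:
  assumes "x \<in> l2" "y \<in> l2" "w \<in> l2"
  shows "l2_inner (\<lambda>i. a * x i + b * y i) w = a * l2_inner x w + b * l2_inner y w"
proof -
  have s1: "summable (\<lambda>i. a * (x i * cnj (w i)))" "summable (\<lambda>i. b * (y i * cnj (w i)))"
    using summable_inner[OF assms(1,3)] summable_inner[OF assms(2,3)] by (auto intro: summable_mult)
  have "l2_inner (\<lambda>i. a * x i + b * y i) w = (\<Sum>i. a * (x i * cnj (w i)) + b * (y i * cnj (w i)))"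
    unfolding l2_inner_def by (simp add: distrib_right mult.assoc)
  also have "\<dots> = (\<Sum>i. a * (x i * cnj (w i))) + (\<Sum>i. b * (y i * cnj (w i)))"
    by (rule suminf_add[OF s1, symmetric])
  also have "\<dots> = a * l2_inner x w + b * l2_inner y w"
    unfolding l2_inner_def
    using summable_inner[OF assms(1,3)] summable_inner[OF assms(2,3)]
    by (simp add: suminf_mult)
  finally show ?thesis .
qed

lemma inner_cnj:
  assumes "x \<in> l2" "y \<in> l2"
  shows "cnj (l2_inner x y) = l2_inner y x"
proof -
  have "(\<lambda>i. x i * cnj (y i)) sums l2_inner x y"
    unfolding l2_inner_def using summable_inner[OF assms] by (rule summable_sums)
  hence "(\<lambda>i. cnj (x i * cnj (y i))) sums cnj (l2_inner x y)"
    by (subst sums_cnj)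
  moreover have "(\<lambda>i. cnj (x i * cnj (y i))) = (\<lambda>i. y i * cnj (x i))"
    by (rule ext) simp
  ultimately have "(\<lambda>i. y i * cnj (x i)) sums cnj (l2_inner x y)" by simp
  thus ?thesis unfolding l2_inner_def by (rule sums_unique)
qed

lemma inner_lin2:
  assumes "x \<in> l2" "u \<in> l2" "v \<in> l2"
  shows "l2_inner x (\<lambda>i. a * u i + b * v i) = cnj a * l2_inner x u + cnj b * l2_inner x v"
proof -
  have "l2_inner x (\<lambda>i. a * u i + b * v i) = cnj (l2_inner (\<lambda>i. a * u i + b * v i) x)"
    using inner_cnj[OF l2_lin[OF assms(2,3)] assms(1)] by (metis complex_cnj_cnj)
  also have "\<dots> = cnj (a * l2_inner u x + b * l2_inner v x)"
    by (simp add: inner_lin1 assms)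
  also have "\<dots> = cnj a * l2_inner x u + cnj b * l2_inner x v"
    using inner_cnj assms by simp
  finally show ?thesis .
qed

lemma inner_self: "x \<in> l2 \<Longrightarrow> l2_inner x x = of_real (\<Sum>i. (cmod (x i))^2)"
  unfolding l2_inner_def
  by (simp add: complex_norm_square[symmetric] suminf_of_real l2_def)

lemma l2_norm_sq: "(l2_norm x)^2 = (\<Sum>i. (cmod (x i))^2)" if "x \<in> l2"
  unfolding l2_norm_def using that
  by (simp add: l2_def suminf_nonneg)

lemma zero_if_norm0:
  assumes "x \<in> l2" "(\<Sum>i. (cmod (x i))^2) = 0"
  shows "x i = 0"
  using suminf_eq_zero_iff[of "\<lambda>i. (cmod (x i))^2"] assms by (auto simp: l2_def)

lemma CS:
  assumes "x \<in> l2" "w \<in> l2"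
  shows "cmod (l2_inner x w) \<le> l2_norm x * l2_norm w"
proof -
  define X where "X = (\<Sum>i. (cmod (x i))^2)"
  define W where "W = (\<Sum>i. (cmod (w i))^2)"
  have X0: "X \<ge> 0" "W \<ge> 0" unfolding X_def W_def using assms by (auto simp: l2_def intro!: suminf_nonneg)
  have le: "cmod (l2_inner x w) \<le> (\<Sum>i. cmod (x i * cnj (w i)))"
    unfolding l2_inner_def using summable_norm[OF summable_inner_norm[OF assms]] by simp
  show ?thesis
  proof (cases "X = 0 \<or> W = 0")
    case True
    hence "(\<lambda>i. x i * cnj (w i)) = (\<lambda>i. 0)" using zero_if_norm0 assms unfolding X_def W_def by auto
    hence "l2_inner x w = 0" unfolding l2_inner_def by simp
    thus ?thesis using X0 unfolding X_def W_def by (simp add: l2_norm_def)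
  next
    case False
    hence pos: "X > 0" "W > 0" using X0 by auto
    define t where "t = sqrt W / sqrt X"
    have t: "t > 0" using pos by (simp add: t_def)
    have b: "cmod (x i * cnj (w i)) \<le> (t * (cmod (x i))^2 + (cmod (w i))^2 / t) / 2" for i
    proof -
      have "0 \<le> (t * cmod (x i) - cmod (w i))^2" by simp
      hence "2 * t * (cmod (x i) * cmod (w i)) \<le> t^2 * (cmod (x i))^2 + (cmod (w i))^2"
        by (simp add: power2_eq_square algebra_simps)
      hence h: "(cmod (x i) * cmod (w i)) * (2 * t) \<le> t^2 * (cmod (x i))^2 + (cmod (w i))^2"
        by (simp add: algebra_simps)
      have e: "(t * (cmod (x i))^2 + (cmod (w i))^2 / t) / 2 = (t^2 * (cmod (x i))^2 + (cmod (w i))^2) / (2*t)"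
        using t by (simp add: field_simps power2_eq_square)
      have "cmod (x i) * cmod (w i) \<le> (t^2 * (cmod (x i))^2 + (cmod (w i))^2) / (2*t)"
        using h t by (simp add: pos_le_divide_eq)
      thus ?thesis unfolding e[symmetric] by (simp add: norm_mult)
    qed
    have "(\<Sum>i. cmod (x i * cnj (w i))) \<le> (\<Sum>i. (t * (cmod (x i))^2 + (cmod (w i))^2 / t) / 2)"
      using assms b
      by (intro suminf_le summable_inner_norm summable_divide summable_add summable_mult)
         (auto simp: l2_def)
    also have "\<dots> = (t * X + W / t) / 2"
    proof -
      have s1: "summable (\<lambda>i. t * (cmod (x i))^2)" "summable (\<lambda>i. (cmod (w i))^2 / t)"
        using assms by (auto simp: l2_def intro!: summable_mult summable_divide)
      have "(\<Sum>i. (t * (cmod (x i))^2 + (cmod (w i))^2 / t) / 2) = (\<Sum>i. (t * (cmod (x i))^2 + (cmod (w i))^2 / t)) / 2"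
        using s1 by (intro suminf_divide summable_add)
      also have "(\<Sum>i. (t * (cmod (x i))^2 + (cmod (w i))^2 / t)) = (\<Sum>i. t * (cmod (x i))^2) + (\<Sum>i. (cmod (w i))^2 / t)"
        using s1 by (intro suminf_add[symmetric])
      also have "\<dots> = t * X + W / t"
        using assms unfolding X_def W_def by (simp add: suminf_mult suminf_divide l2_def)
      finally show ?thesis .
    qed
    also have "\<dots> = sqrt X * sqrt W"
      using pos unfolding t_def by (simp add: field_simps real_sqrt_mult[symmetric])
    finally show ?thesis using le unfolding l2_norm_def X_def W_def by (simp add: real_sqrt_mult)
  qed
qed


lemma inner_scale1: "x \<in> l2 \<Longrightarrow> w \<in> l2 \<Longrightarrow> l2_inner (\<lambda>i. c * x i) w = c * l2_inner x w"
  using inner_lin1[of x x w c 0] by simp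

lemma inner_scale2: "x \<in> l2 \<Longrightarrow> w \<in> l2 \<Longrightarrow> l2_inner x (\<lambda>i. c * w i) = cnj c * l2_inner x w"
  using inner_lin2[of x w w c 0] by simp

definition unitv :: "(nat \<Rightarrow> complex) \<Rightarrow> bool" where
  "unitv w \<longleftrightarrow> w \<in> l2 \<and> (\<Sum>i. (cmod (w i))^2) = 1"

definition rk1 :: "(nat \<Rightarrow> complex) \<Rightarrow> (nat \<Rightarrow> complex) \<Rightarrow> (nat \<Rightarrow> complex)" where
  "rk1 w x = (\<lambda>i. l2_inner x w * w i)"

lemma unit_inner: "unitv w \<Longrightarrow> l2_inner w w = 1"
  by (simp add: unitv_def inner_self)

lemma unit_norm: "unitv w \<Longrightarrow> l2_norm w = 1"
  by (simp add: unitv_def l2_norm_def)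

lemma sum_sq_scale:
  assumes "z \<in> l2" shows "(\<Sum>i. (cmod (a * z i))^2) = (cmod a)^2 * (\<Sum>i. (cmod (z i))^2)"
  using assms by (simp add: norm_mult power_mult_distrib suminf_mult l2_def)

lemma l2_norm_scale:
  assumes "z \<in> l2" shows "l2_norm (\<lambda>i. a * z i) = cmod a * l2_norm z"
proof -
  have "(\<Sum>i. (cmod (a * z i))^2) = (cmod a)^2 * (\<Sum>i. (cmod (z i))^2)"
    using assms by (simp add: norm_mult power_mult_distrib suminf_mult l2_def)
  thus ?thesis unfolding l2_norm_def by (simp add: real_sqrt_mult)
qed

lemma rk1_l2: "w \<in> l2 \<Longrightarrow> rk1 w x \<in> l2"
  unfolding rk1_def by (rule l2_scale)

lemma rk1_proj:
  assumes u: "unitv w"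
  shows "rank_one_projection (rk1 w)"
proof -
  have w: "w \<in> l2" using u by (simp add: unitv_def)
  have ww: "l2_inner w w = 1" using unit_inner[OF u] .
  have bo: "bounded_op (rk1 w)"
    unfolding bounded_op_def
  proof (intro conjI ballI allI)
    show "\<And>x. rk1 w x \<in> l2" using rk1_l2[OF w] .
    show "rk1 w (\<lambda>i. a * x i + b * y i) = (\<lambda>i. a * rk1 w x i + b * rk1 w y i)"
      if "x \<in> l2" "y \<in> l2" for x y a b
      using that w by (simp add: rk1_def inner_lin1 algebra_simps)
    show "\<exists>C. \<forall>x\<in>l2. l2_norm (rk1 w x) \<le> C * l2_norm x"
    proof (intro exI ballI)
      fix x assume x: "x \<in> l2"
      have "l2_norm (rk1 w x) = cmod (l2_inner x w) * l2_norm w"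
        unfolding rk1_def by (rule l2_norm_scale[OF w])
      also have "\<dots> \<le> l2_norm x" using CS[OF x w] unit_norm[OF u] by simp
      finally show "l2_norm (rk1 w x) \<le> 1 * l2_norm x" by simp
    qed
  qed
  have idem: "rk1 w (rk1 w x) = rk1 w x" if "x \<in> l2" for x
    unfolding rk1_def using w ww by (simp add: inner_scale1)
  have sa: "l2_inner (rk1 w x) y = l2_inner x (rk1 w y)" if "x \<in> l2" "y \<in> l2" for x y
  proof -
    have "l2_inner (rk1 w x) y = l2_inner x w * l2_inner w y"
      unfolding rk1_def using that w by (simp add: inner_scale1)
    also have "\<dots> = l2_inner x (rk1 w y)"
      unfolding rk1_def using that w by (simp add: inner_scale2 inner_cnj)
    finally show ?thesis .
  qed
  have ne: "w \<noteq> (\<lambda>_. 0)" using u by (auto simp: unitv_def)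
  have rng: "rk1 w ` l2 = {(\<lambda>i. c * w i) | c. True}"
  proof (intro equalityI subsetI)
    fix z assume "z \<in> rk1 w ` l2"
    thus "z \<in> {(\<lambda>i. c * w i) | c. True}" by (auto simp: rk1_def)
  next
    fix z assume "z \<in> {(\<lambda>i. c * w i) | c. True}"
    then obtain c where z: "z = (\<lambda>i. c * w i)" by auto
    have "rk1 w z = z" unfolding z rk1_def using w ww by (simp add: inner_scale1)
    moreover have "z \<in> l2" unfolding z by (rule l2_scale[OF w])
    ultimately show "z \<in> rk1 w ` l2" by (metis image_eqI)
  qed
  show ?thesis unfolding rank_one_projection_def
    using bo idem sa ne rng w by blast
qed

lemma E_form:
  assumes "rank_one_projection E"
  shows "\<exists>w. unitv w \<and> (\<forall>x\<in>l2. E x = rk1 w x)"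
proof -
  obtain v where v: "v \<in> l2" "v \<noteq> (\<lambda>_. 0)" and rng: "E ` l2 = {(\<lambda>i. c * v i) | c. True}"
    using assms unfolding rank_one_projection_def by blast
  have idem: "\<forall>x\<in>l2. E (E x) = E x" and sa: "\<forall>x\<in>l2. \<forall>y\<in>l2. l2_inner (E x) y = l2_inner x (E y)"
    and l2E: "\<forall>x\<in>l2. E x \<in> l2"
    using assms unfolding rank_one_projection_def bounded_op_def by blast+
  define N where "N = (\<Sum>i. (cmod (v i))^2)"
  have N0: "N \<ge> 0" unfolding N_def using v by (auto simp: l2_def intro!: suminf_nonneg)
  have "N \<noteq> 0"
  proof
    assume "N = 0"
    hence "\<forall>i. v i = 0" using zero_if_norm0[OF v(1)] unfolding N_def by blast
    thus False using v(2) by auto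
  qed
  hence Np: "N > 0" using N0 by simp
  define w where "w = (\<lambda>i. complex_of_real (1 / sqrt N) * v i)"
  have wl2: "w \<in> l2" unfolding w_def by (rule l2_scale[OF v(1)])
  have "(\<Sum>i. (cmod (w i))^2) = (1 / sqrt N)^2 * N"
    unfolding w_def using sum_sq_scale[OF v(1), of "complex_of_real (1 / sqrt N)"] N0
    unfolding N_def[symmetric] by (simp only: norm_of_real) simp
  also have "\<dots> = 1" using Np by (simp add: power_divide)
  finally have uw: "unitv w" using wl2 by (simp add: unitv_def)
  have vw: "v = (\<lambda>i. complex_of_real (sqrt N) * w i)"
    unfolding w_def using Np by (auto simp: mult.assoc[symmetric] simp flip: of_real_mult)
  have "w \<in> E ` l2" unfolding rng w_def by blast
  then obtain y where y: "y \<in> l2" "w = E y" by blast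
  have Ew: "E w = w" using idem y by simp
  have "E x = rk1 w x" if x: "x \<in> l2" for x
  proof -
    have "E x \<in> E ` l2" using x by blast
    then obtain c where c: "E x = (\<lambda>i. c * v i)" unfolding rng by blast
    hence c': "E x = (\<lambda>i. (c * complex_of_real (sqrt N)) * w i)" unfolding vw by (simp add: mult.assoc)
    have "l2_inner (E x) w = c * complex_of_real (sqrt N)"
      unfolding c' using wl2 unit_inner[OF uw] by (simp add: inner_scale1)
    moreover have "l2_inner (E x) w = l2_inner x w" using sa x wl2 Ew by metis
    ultimately show ?thesis unfolding rk1_def using c' by simp
  qed
  thus ?thesis using uw by blast
qed


lemma nsq:
  assumes u: "unitv u" and v: "unitv v"
  shows "(\<Sum>i. (cmod (complex_of_real a * u i + complex_of_real b * v i))^2)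
         = a^2 + b^2 + 2*a*b*Re (l2_inner u v)"
proof -
  have ul: "u \<in> l2" and vl: "v \<in> l2" using u v by (auto simp: unitv_def)
  define z where "z = (\<lambda>i. complex_of_real a * u i + complex_of_real b * v i)"
  have zl: "z \<in> l2" unfolding z_def by (rule l2_lin[OF ul vl])
  have "l2_inner z z = complex_of_real a * l2_inner u z + complex_of_real b * l2_inner v z"
    using inner_lin1[OF ul vl zl, of "complex_of_real a" "complex_of_real b"] by (simp only: z_def[symmetric])
  also have "l2_inner u z = complex_of_real a * l2_inner u u + complex_of_real b * l2_inner u v"
    unfolding z_def using inner_lin2[OF ul ul vl] by simp
  also have "l2_inner v z = complex_of_real a * l2_inner v u + complex_of_real b * l2_inner v v"
    unfolding z_def using inner_lin2[OF vl ul vl] by simp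
  finally have e: "l2_inner z z = complex_of_real a * (complex_of_real a + complex_of_real b * l2_inner u v)
     + complex_of_real b * (complex_of_real a * cnj (l2_inner u v) + complex_of_real b)"
    using unit_inner[OF u] unit_inner[OF v] inner_cnj[OF ul vl] by simp
  have "(\<Sum>i. (cmod (z i))^2) = Re (l2_inner z z)" using inner_self[OF zl] by simp
  also have "\<dots> = a^2 + b^2 + 2*a*b*Re (l2_inner u v)"
    unfolding e by (simp add: algebra_simps power2_eq_square)
  finally show ?thesis unfolding z_def .
qed

lemma inner_self_nonneg: "x \<in> l2 \<Longrightarrow> 0 \<le> (\<Sum>i. (cmod (x i))^2)"
  by (auto simp: l2_def intro!: suminf_nonneg)

lemma rk1_scale:
  assumes "w \<in> l2" "x \<in> l2"
  shows "rk1 (\<lambda>i. complex_of_real k * w i) x i = complex_of_real (k^2) * rk1 w x i"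
  unfolding rk1_def using assms by (simp add: inner_scale2 power2_eq_square)

lemma normalize:
  assumes w: "w \<in> l2" and m: "(\<Sum>i. (cmod (w i))^2) = m" "m > 0"
  shows "unitv (\<lambda>i. complex_of_real (1 / sqrt m) * w i)
       \<and> (\<forall>x\<in>l2. \<forall>i. complex_of_real m * rk1 (\<lambda>i. complex_of_real (1 / sqrt m) * w i) x i = rk1 w x i)"
proof
  show "unitv (\<lambda>i. complex_of_real (1 / sqrt m) * w i)"
    unfolding unitv_def using l2_scale[OF w] sum_sq_scale[OF w, of "complex_of_real (1 / sqrt m)"] m
    by (simp only: norm_of_real) (simp add: power_divide)
  show "\<forall>x\<in>l2. \<forall>i. complex_of_real m * rk1 (\<lambda>i. complex_of_real (1 / sqrt m) * w i) x i = rk1 w x i"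
  proof (intro ballI allI)
    fix x i assume x: "x \<in> l2"
    have "rk1 (\<lambda>i. complex_of_real (1 / sqrt m) * w i) x i = complex_of_real ((1 / sqrt m)^2) * rk1 w x i"
      by (rule rk1_scale[OF w x])
    thus "complex_of_real m * rk1 (\<lambda>i. complex_of_real (1 / sqrt m) * w i) x i = rk1 w x i"
      using m by (simp add: power_divide)
  qed
qed

lemma alg4:
  fixes a b a' b' X Y U V r :: complex
  assumes "a*a + a'*a' = r" "b*b + b'*b' = 1" "a*b + a'*b' = 0"
  shows "(a*X + b*Y)*(a*U+b*V) + (a'*X+b'*Y)*(a'*U+b'*V) = r*(X*U) + Y*V"
proof -
  have "(a*X + b*Y)*(a*U+b*V) + (a'*X+b'*Y)*(a'*U+b'*V)
      = (a*a + a'*a')*(X*U) + (b*b + b'*b')*(Y*V) + (a*b + a'*b')*(X*V + Y*U)"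
    by (simp add: algebra_simps)
  thus ?thesis using assms by simp
qed

lemma sc_lemma: "s * (s * (cos t * cos t)) + s * (s * (sin t * sin t)) = (s * s :: real)"
proof -
  have h: "cos t * cos t + sin t * sin t = 1"
    using sin_cos_squared_add[of t] by (simp add: power2_eq_square)
  have "s * (s * (cos t * cos t)) + s * (s * (sin t * sin t)) = s * s * (cos t * cos t + sin t * sin t)"
    by (simp only: distrib_left mult.assoc)
  thus ?thesis unfolding h by simp
qed

lemma two_dim:
  assumes u: "unitv u" and v: "unitv v" and r: "0 \<le> r" "r < c" "c \<le> 1"
  shows "\<exists>p q. unitv p \<and> unitv q \<and> (\<forall>x\<in>l2. \<forall>i.
     complex_of_real r * rk1 u x i + rk1 v x i = complex_of_real c * rk1 p x i + complex_of_real (r+1-c) * rk1 q x i)"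
proof -
  have ul: "u \<in> l2" and vl: "v \<in> l2" using u v by (auto simp: unitv_def)
  define s where "s = sqrt r"
  have ss: "s * s = r" using r unfolding s_def by simp
  define \<rho> where "\<rho> = Re (l2_inner u v)"
  define f where "f = (\<lambda>t. (s * cos t)^2 + (sin t)^2 + 2 * (s * cos t) * sin t * \<rho>)"
  have f0: "f 0 = r" unfolding f_def using ss by (simp add: power2_eq_square)
  have f1: "f (pi/2) = 1" unfolding f_def by simp
  have "continuous_on {0..pi/2} f" unfolding f_def by (intro continuous_intros)
  then obtain t where t: "f t = c" using IVT'[of f 0 c "pi/2"] f0 f1 r by auto
  define y1 where "y1 = (\<lambda>i. complex_of_real (s * cos t) * u i + complex_of_real (sin t) * v i)"
  define y2 where "y2 = (\<lambda>i. complex_of_real (- s * sin t) * u i + complex_of_real (cos t) * v i)"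
  have y1l: "y1 \<in> l2" unfolding y1_def by (rule l2_lin[OF ul vl])
  have y2l: "y2 \<in> l2" unfolding y2_def by (rule l2_lin[OF ul vl])
  have n1: "(\<Sum>i. (cmod (y1 i))^2) = c"
    unfolding y1_def nsq[OF u v] using t unfolding f_def \<rho>_def by (simp add: power2_eq_square)
  have n2: "(\<Sum>i. (cmod (y2 i))^2) = r + 1 - c"
  proof -
    have "(\<Sum>i. (cmod (y2 i))^2) = (s * sin t)^2 + (cos t)^2 - 2 * (s * sin t) * cos t * \<rho>"
      unfolding y2_def nsq[OF u v] \<rho>_def by (simp add: power2_eq_square)
    also have "\<dots> = s*s + 1 - f t"
    proof -
      have h: "cos t * cos t + sin t * sin t = 1"
        using sin_cos_squared_add[of t] by (simp add: power2_eq_square)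
      have sc0: "s * (s * (cos t * cos t)) + s * (s * (sin t * sin t)) = s * s * (cos t * cos t + sin t * sin t)"
        by (simp only: distrib_left mult.assoc)
      have sc: "s * (s * (cos t * cos t)) + s * (s * (sin t * sin t)) = s * s"
        unfolding sc0 h by simp
      show ?thesis unfolding f_def using sc by (simp add: power2_eq_square algebra_simps)
    qed
    also have "\<dots> = r + 1 - c" using ss t by simp
    finally show ?thesis .
  qed
  have ident: "rk1 y1 x i + rk1 y2 x i = complex_of_real r * rk1 u x i + rk1 v x i" if x: "x \<in> l2" for x i
  proof -
    have i1: "l2_inner x y1 = complex_of_real (s * cos t) * l2_inner x u + complex_of_real (sin t) * l2_inner x v"
      unfolding y1_def using inner_lin2[OF x ul vl, of "complex_of_real (s * cos t)" "complex_of_real (sin t)"]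
      by (simp only: complex_cnj_complex_of_real)
    have i2: "l2_inner x y2 = complex_of_real (- s * sin t) * l2_inner x u + complex_of_real (cos t) * l2_inner x v"
      unfolding y2_def using inner_lin2[OF x ul vl, of "complex_of_real (- s * sin t)" "complex_of_real (cos t)"]
      by (simp only: complex_cnj_complex_of_real)
    have h1: "complex_of_real (s * cos t) * complex_of_real (s * cos t) + complex_of_real (- s * sin t) * complex_of_real (- s * sin t) = complex_of_real r"
    proof -
      have "(s * cos t) * (s * cos t) + (- s * sin t) * (- s * sin t) = s * (s * (cos t * cos t)) + s * (s * (sin t * sin t))"
        by (simp add: algebra_simps)
      also have "\<dots> = r" using ss sc_lemma[of s t] by simp
      finally show ?thesis by (metis of_real_add of_real_mult)
    qed
    have h2: "complex_of_real (sin t) * complex_of_real (sin t) + complex_of_real (cos t) * complex_of_real (cos t) = 1"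
    proof -
      have "sin t * sin t + cos t * cos t = 1" using sin_cos_squared_add[of t] by (simp add: power2_eq_square)
      thus ?thesis by (metis of_real_1 of_real_add of_real_mult)
    qed
    have h3: "complex_of_real (s * cos t) * complex_of_real (sin t) + complex_of_real (- s * sin t) * complex_of_real (cos t) = 0"
      by (simp add: algebra_simps)
    have e1: "y1 i = complex_of_real (s * cos t) * u i + complex_of_real (sin t) * v i" by (simp add: y1_def)
    have e2: "y2 i = complex_of_real (- s * sin t) * u i + complex_of_real (cos t) * v i" by (simp add: y2_def)
    show ?thesis unfolding rk1_def i1 i2 e1 e2
      by (rule alg4[OF h1 h2 h3])
  qed
  have c0: "c > 0" using r by simp
  obtain p where p: "unitv p" "\<forall>x\<in>l2. \<forall>i. complex_of_real c * rk1 p x i = rk1 y1 x i"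
    using normalize[OF y1l n1 c0] by blast
  obtain q where q: "unitv q" "\<forall>x\<in>l2. \<forall>i. complex_of_real (r+1-c) * rk1 q x i = rk1 y2 x i"
  proof (cases "r + 1 - c > 0")
    case True
    thus ?thesis using normalize[OF y2l n2 True] that by blast
  next
    case False
    hence "r + 1 - c = 0" using r by simp
    hence z: "y2 i = 0" for i using zero_if_norm0[OF y2l] n2 by simp
    have "rk1 y2 x i = 0" for x i unfolding rk1_def z by simp
    thus ?thesis using that[of u] u \<open>r + 1 - c = 0\<close> by simp
  qed
  show ?thesis using p q ident by (intro exI[of _ p] exI[of _ q]) simp
qed


definition pick :: "(nat \<Rightarrow> complex) \<Rightarrow> (nat \<Rightarrow> complex) \<Rightarrow> real \<Rightarrow> real \<Rightarrow> (nat \<Rightarrow> complex) \<times> (nat \<Rightarrow> complex)" where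
  "pick u v r c = (SOME pq. unitv (fst pq) \<and> unitv (snd pq) \<and> (\<forall>x\<in>l2. \<forall>i.
     complex_of_real r * rk1 u x i + rk1 v x i = complex_of_real c * rk1 (fst pq) x i + complex_of_real (r+1-c) * rk1 (snd pq) x i))"

lemma pick_spec:
  assumes "unitv u" "unitv v" "0 \<le> r" "r < c" "c \<le> 1"
  shows "unitv (fst (pick u v r c)) \<and> unitv (snd (pick u v r c)) \<and> (\<forall>x\<in>l2. \<forall>i.
     complex_of_real r * rk1 u x i + rk1 v x i = complex_of_real c * rk1 (fst (pick u v r c)) x i + complex_of_real (r+1-c) * rk1 (snd (pick u v r c)) x i)"
proof -
  obtain p q where "unitv p \<and> unitv q \<and> (\<forall>x\<in>l2. \<forall>i.
     complex_of_real r * rk1 u x i + rk1 v x i = complex_of_real c * rk1 p x i + complex_of_real (r+1-c) * rk1 q x i)"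
    using two_dim[OF assms] by blast
  hence "\<exists>pq. unitv (fst pq) \<and> unitv (snd pq) \<and> (\<forall>x\<in>l2. \<forall>i.
     complex_of_real r * rk1 u x i + rk1 v x i = complex_of_real c * rk1 (fst pq) x i + complex_of_real (r+1-c) * rk1 (snd pq) x i)"
    by (intro exI[of _ "(p,q)"]) simp
  thus ?thesis unfolding pick_def by (rule someI_ex)
qed

definition step :: "(nat \<Rightarrow> nat \<Rightarrow> complex) \<Rightarrow> nat \<Rightarrow> real \<Rightarrow> nat \<times> real \<times> (nat \<Rightarrow> complex)
    \<Rightarrow> (nat \<times> real \<times> (nat \<Rightarrow> complex)) \<times> (nat \<Rightarrow> complex)" where
  "step w n c st = (case st of (k, r, R) \<Rightarrow>
     if c \<le> r then ((k, r - c, R), R)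
     else if k < n then ((Suc k, r + 1 - c, snd (pick R (w k) r c)), fst (pick R (w k) r c))
     else ((k, r, R), R))"

fun st :: "(nat \<Rightarrow> nat \<Rightarrow> complex) \<Rightarrow> nat \<Rightarrow> (nat \<Rightarrow> real) \<Rightarrow> nat \<Rightarrow> nat \<times> real \<times> (nat \<Rightarrow> complex)" where
  "st w n \<xi> 0 = (0, 0, std_basis 0)"
| "st w n \<xi> (Suc N) = fst (step w n (\<xi> N) (st w n \<xi> N))"

definition out :: "(nat \<Rightarrow> nat \<Rightarrow> complex) \<Rightarrow> nat \<Rightarrow> (nat \<Rightarrow> real) \<Rightarrow> nat \<Rightarrow> (nat \<Rightarrow> complex)" where
  "out w n \<xi> N = snd (step w n (\<xi> N) (st w n \<xi> N))"

lemma std_basis_l2: "std_basis k \<in> l2"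
proof -
  have "(\<lambda>i. (cmod (std_basis k i))^2) = (\<lambda>i. if i = k then (\<lambda>_. 1::real) i else 0)"
    by (auto simp: std_basis_def)
  moreover have "(\<lambda>i. if i = k then (\<lambda>_. 1::real) i else 0) sums 1" using sums_single[of k "\<lambda>_. 1::real"] by simp
  ultimately show ?thesis unfolding l2_def by (auto simp: sums_iff)
qed

lemma std_unit: "unitv (std_basis k)"
proof -
  have "(\<lambda>i. (cmod (std_basis k i))^2) = (\<lambda>i. if i = k then (\<lambda>_. 1::real) i else 0)"
    by (auto simp: std_basis_def)
  moreover have "(\<lambda>i. if i = k then (\<lambda>_. 1::real) i else 0) sums 1" using sums_single[of k "\<lambda>_. 1::real"] by simp
  ultimately show ?thesis unfolding unitv_def using std_basis_l2 by (auto simp: sums_iff)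
qed

lemma inner_std_right: "l2_inner y (std_basis k) = y k"
proof -
  have "(\<lambda>i. y i * cnj (std_basis k i)) = (\<lambda>i. if i = k then y i else 0)"
    by (auto simp: std_basis_def)
  thus ?thesis unfolding l2_inner_def using sums_single[of k y] by (simp add: sums_iff)
qed

lemma inner_std_left: "l2_inner (std_basis k) y = cnj (y k)"
proof -
  have "(\<lambda>i. std_basis k i * cnj (y i)) = (\<lambda>i. if i = k then cnj (y i) else 0)"
    by (auto simp: std_basis_def)
  thus ?thesis unfolding l2_inner_def using sums_single[of k "\<lambda>i. cnj (y i)"] by (simp add: sums_iff)
qed

lemma invariant:
  assumes W: "\<forall>m<n. unitv (w m)" and X: "\<forall>j. 0 \<le> \<xi> j \<and> \<xi> j \<le> 1"
    and S: "\<forall>N. (\<Sum>j<N. \<xi> j) \<le> real n"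
  shows "fst (st w n \<xi> N) \<le> n \<and> 0 \<le> fst (snd (st w n \<xi> N)) \<and> unitv (snd (snd (st w n \<xi> N)))
    \<and> real (fst (st w n \<xi> N)) - fst (snd (st w n \<xi> N)) = (\<Sum>j<N. \<xi> j)
    \<and> (\<forall>x\<in>l2. \<forall>i. (\<Sum>m<fst (st w n \<xi> N). rk1 (w m) x i) =
          (\<Sum>j<N. complex_of_real (\<xi> j) * rk1 (out w n \<xi> j) x i)
          + complex_of_real (fst (snd (st w n \<xi> N))) * rk1 (snd (snd (st w n \<xi> N))) x i)"
proof (induction N)
  case 0
  show ?case by (simp add: std_unit rk1_def)
next
  case (Suc N)
  obtain k r R where kr: "st w n \<xi> N = (k, r, R)" by (metis prod.exhaust)
  define c where "c = \<xi> N"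
  have IH: "k \<le> n" "0 \<le> r" "unitv R" "real k - r = (\<Sum>j<N. \<xi> j)"
    "\<forall>x\<in>l2. \<forall>i. (\<Sum>m<k. rk1 (w m) x i) = (\<Sum>j<N. complex_of_real (\<xi> j) * rk1 (out w n \<xi> j) x i)
          + complex_of_real r * rk1 R x i"
    using Suc.IH unfolding kr by auto
  have c01: "0 \<le> c" "c \<le> 1" using X unfolding c_def by auto
  have SN: "(\<Sum>j<Suc N. \<xi> j) = (\<Sum>j<N. \<xi> j) + c" unfolding c_def by simp
  show ?case
  proof (cases "c \<le> r")
    case True
    have e: "st w n \<xi> (Suc N) = (k, r - c, R)" "out w n \<xi> N = R"
      using True kr unfolding out_def by (simp_all add: step_def c_def)
    show ?thesis unfolding e
    proof (intro conjI ballI allI)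
      fix x i assume "x \<in> l2"
      thus "(\<Sum>m<fst (k, r - c, R). rk1 (w m) x i) = (\<Sum>j<Suc N. complex_of_real (\<xi> j) * rk1 (out w n \<xi> j) x i)
          + complex_of_real (fst (snd (k, r - c, R))) * rk1 (snd (snd (k, r - c, R))) x i"
        using IH(5) e(2) by (simp add: c_def algebra_simps)
    qed (use IH True SN in auto)
  next
    case False
    show ?thesis
    proof (cases "k < n")
      case True
      define p where "p = fst (pick R (w k) r c)"
      define q where "q = snd (pick R (w k) r c)"
      have ps: "unitv p" "unitv q" "\<forall>x\<in>l2. \<forall>i. complex_of_real r * rk1 R x i + rk1 (w k) x i
          = complex_of_real c * rk1 p x i + complex_of_real (r+1-c) * rk1 q x i"
        using pick_spec[OF IH(3) W[rule_format, OF True] IH(2) _ c01(2)] False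
        unfolding p_def q_def by auto
      have e: "st w n \<xi> (Suc N) = (Suc k, r + 1 - c, q)" "out w n \<xi> N = p"
        using True False kr unfolding out_def p_def q_def by (simp_all add: step_def c_def)
      show ?thesis unfolding e
      proof (intro conjI ballI allI)
        fix x i assume x: "x \<in> l2"
        have "(\<Sum>m<Suc k. rk1 (w m) x i) = (\<Sum>m<k. rk1 (w m) x i) + rk1 (w k) x i" by simp
        also have "\<dots> = (\<Sum>j<N. complex_of_real (\<xi> j) * rk1 (out w n \<xi> j) x i)
          + (complex_of_real r * rk1 R x i + rk1 (w k) x i)" using IH(5) x by simp
        also have "\<dots> = (\<Sum>j<N. complex_of_real (\<xi> j) * rk1 (out w n \<xi> j) x i)
          + complex_of_real c * rk1 p x i + complex_of_real (r+1-c) * rk1 q x i" using ps(3) x by simp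
        finally show "(\<Sum>m<fst (Suc k, r + 1 - c, q). rk1 (w m) x i) = (\<Sum>j<Suc N. complex_of_real (\<xi> j) * rk1 (out w n \<xi> j) x i)
          + complex_of_real (fst (snd (Suc k, r + 1 - c, q))) * rk1 (snd (snd (Suc k, r + 1 - c, q))) x i"
          using e(2) by (simp add: c_def)
      qed (use IH True False SN ps c01 in auto)
    next
      case False2: False
      have "(\<Sum>j<Suc N. \<xi> j) > real n" using SN IH(4) False False2 by simp
      thus ?thesis using S by (meson not_le)
    qed
  qed
qed


lemma cnjsq: "cnj z * z = complex_of_real ((cmod z)^2)"
  using complex_norm_square[of z] by (simp only: mult.commute)

lemma R_stable:
  assumes "fst (st w n \<xi> N) = n" "fst (st w n \<xi> (Suc N)) = n"
  shows "snd (snd (st w n \<xi> (Suc N))) = snd (snd (st w n \<xi> N))"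
proof -
  obtain k r R where kr: "st w n \<xi> N = (k, r, R)" by (metis prod.exhaust)
  thus ?thesis using assms by (auto simp: step_def split: if_splits)
qed

theorem lemma3p3:
  fixes A :: "(nat \<Rightarrow> complex) \<Rightarrow> (nat \<Rightarrow> complex)"
    and E :: "nat \<Rightarrow> (nat \<Rightarrow> complex) \<Rightarrow> (nat \<Rightarrow> complex)"
    and n :: nat
    and \<xi> :: "nat \<Rightarrow> real"
  assumes "\<forall>j<n. rank_one_projection (E j)"
    and "\<forall>x\<in>l2. A x = (\<lambda>i. \<Sum>j<n. E j x i)"
    and "\<forall>j. 0 \<le> \<xi> j \<and> \<xi> j \<le> 1"
    and "(\<lambda>j. complex_of_real (\<xi> j)) sums op_trace A"
  shows "\<xi> \<in> Adm A"
proof -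
  note E = assms(1) and Adef = assms(2) and X = assms(3) and T = assms(4)
  have ch: "\<forall>m. \<exists>v. m < n \<longrightarrow> unitv v \<and> (\<forall>x\<in>l2. E m x = rk1 v x)"
    using E E_form by blast
  obtain w where w0: "\<forall>m. m < n \<longrightarrow> unitv (w m) \<and> (\<forall>x\<in>l2. E m x = rk1 (w m) x)"
    using choice[OF ch] by blast
  have w: "\<And>m. m < n \<Longrightarrow> unitv (w m) \<and> (\<forall>x\<in>l2. E m x = rk1 (w m) x)" using w0 by blast
  have wl2: "m < n \<Longrightarrow> w m \<in> l2" for m using w by (simp add: unitv_def)
  have tr_terms: "l2_inner (A (std_basis k)) (std_basis k) = (\<Sum>m<n. complex_of_real ((cmod (w m k))^2))" for k
  proof -
    have "l2_inner (A (std_basis k)) (std_basis k) = A (std_basis k) k" by (rule inner_std_right)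
    also have "\<dots> = (\<Sum>m<n. E m (std_basis k) k)" using Adef std_basis_l2 by simp
    also have "\<dots> = (\<Sum>m<n. rk1 (w m) (std_basis k) k)"
      using w std_basis_l2 by (intro sum.cong) auto
    also have "\<dots> = (\<Sum>m<n. complex_of_real ((cmod (w m k))^2))"
      unfolding rk1_def inner_std_left by (intro sum.cong refl) (simp only: cnjsq)
    finally show ?thesis .
  qed
  have "(\<lambda>k. \<Sum>m<n. complex_of_real ((cmod (w m k))^2)) sums (\<Sum>m<n. complex_of_real 1)"
  proof (rule sums_sum)
    fix m assume "m \<in> {..<n}"
    hence u: "unitv (w m)" using w by simp
    hence "(\<lambda>k. (cmod (w m k))^2) sums 1" using summable_sums[of "\<lambda>k. (cmod (w m k))^2"] unfolding unitv_def l2_def by auto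
    thus "(\<lambda>k. complex_of_real ((cmod (w m k))^2)) sums complex_of_real 1" by (rule sums_of_real)
  qed
  hence "(\<lambda>k. l2_inner (A (std_basis k)) (std_basis k)) sums complex_of_real (real n)"
    unfolding tr_terms by simp
  hence "op_trace A = complex_of_real (real n)" unfolding op_trace_def by (simp add: sums_iff)
  hence "(\<lambda>j. complex_of_real (\<xi> j)) sums complex_of_real (real n)" using T by simp
  hence xs: "\<xi> sums real n" by (simp only: sums_of_real_iff)
  define S where "S N = (\<Sum>j<N. \<xi> j)" for N
  have Slim: "S \<longlonglongrightarrow> real n" using xs unfolding sums_def S_def .
  have Sle: "\<forall>N. (\<Sum>j<N. \<xi> j) \<le> real n"
  proof
    fix N show "(\<Sum>j<N. \<xi> j) \<le> real n"
      using sum_le_suminf[of \<xi> "{..<N}"] xs X by (auto simp: sums_iff)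
  qed
  have W: "\<forall>m<n. unitv (w m)" using w by simp
  note inv = invariant[OF W X Sle]
  have out_unit: "unitv (out w n \<xi> j)" for j
  proof -
    obtain k r R where kr: "st w n \<xi> j = (k, r, R)" by (metis prod.exhaust)
    have IH: "k \<le> n" "0 \<le> r" "unitv R" using inv[of j] kr by auto
    show ?thesis
    proof (cases "\<xi> j \<le> r")
      case True thus ?thesis using kr IH by (simp add: out_def step_def)
    next
      case False
      show ?thesis
      proof (cases "k < n")
        case True
        thus ?thesis using False kr IH pick_spec[OF IH(3) W[rule_format, OF True] IH(2), of "\<xi> j"] X
          by (simp add: out_def step_def)
      next
        case False
        thus ?thesis using \<open>\<not> \<xi> j \<le> r\<close> kr IH by (simp add: out_def step_def)
      qed
    qed
  qed
  have "\<forall>\<^sub>F N in sequentially. S N > real n - 1"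
    using Slim by (rule order_tendstoD) simp
  then obtain N0 where N0: "\<And>N. N \<ge> N0 \<Longrightarrow> S N > real n - 1" by (auto simp: eventually_sequentially)
  have kn: "fst (st w n \<xi> N) = n" if "N \<ge> N0" for N
  proof -
    have "real (fst (st w n \<xi> N)) \<ge> S N" using inv[of N] unfolding S_def by linarith
    hence "real (fst (st w n \<xi> N)) > real n - 1" using N0[OF that] by linarith
    thus ?thesis using inv[of N] by linarith
  qed
  have RR: "snd (snd (st w n \<xi> N)) = snd (snd (st w n \<xi> N0))" if "N \<ge> N0" for N
    using that
  proof (induction N rule: dec_induct)
    case base show ?case by simp
  next
    case (step N)
    thus ?case using R_stable[OF kn kn] by simp
  qed
  have rr: "fst (snd (st w n \<xi> N)) = real n - S N" if "N \<ge> N0" for N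
    using inv[of N] kn[OF that] unfolding S_def by simp
  define R0 where "R0 = snd (snd (st w n \<xi> N0))"
  show ?thesis unfolding Adm_def
  proof (intro CollectI conjI exI[of _ "\<lambda>j. rk1 (out w n \<xi> j)"] allI ballI)
    show "0 \<le> \<xi> j" for j using X by simp
    show "bdd_above (range \<xi>)" using X by (intro bdd_aboveI[of _ 1]) auto
    show "rank_one_projection (rk1 (out w n \<xi> j))" for j using rk1_proj[OF out_unit] .
    fix x assume x: "x \<in> l2"
    define z where "z = rk1 R0 x"
    have zl: "z \<in> l2" unfolding z_def R0_def using inv[of N0] rk1_l2 by (auto simp: unitv_def)
    have ev: "\<forall>\<^sub>F N in sequentially. \<bar>real n - S N\<bar> * l2_norm z =
        l2_norm (\<lambda>i. A x i - (\<Sum>j<N. complex_of_real (\<xi> j) * rk1 (out w n \<xi> j) x i))"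
    proof (rule eventually_sequentiallyI[of N0])
      fix N assume N: "N \<ge> N0"
      have "(\<lambda>i. A x i - (\<Sum>j<N. complex_of_real (\<xi> j) * rk1 (out w n \<xi> j) x i))
          = (\<lambda>i. complex_of_real (real n - S N) * z i)"
      proof
        fix i
        have "A x i = (\<Sum>m<n. rk1 (w m) x i)" using Adef x w by simp
        also have "\<dots> = (\<Sum>j<N. complex_of_real (\<xi> j) * rk1 (out w n \<xi> j) x i)
          + complex_of_real (real n - S N) * z i"
          using inv[of N] x kn[OF N] rr[OF N] RR[OF N] unfolding z_def R0_def by simp
        finally show "A x i - (\<Sum>j<N. complex_of_real (\<xi> j) * rk1 (out w n \<xi> j) x i)
          = complex_of_real (real n - S N) * z i" by simp
      qed
      hence "l2_norm (\<lambda>i. A x i - (\<Sum>j<N. complex_of_real (\<xi> j) * rk1 (out w n \<xi> j) x i))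
          = \<bar>real n - S N\<bar> * l2_norm z"
        using l2_norm_scale[OF zl, of "complex_of_real (real n - S N)"] by (simp only: norm_of_real real_norm_def)
      thus "\<bar>real n - S N\<bar> * l2_norm z =
        l2_norm (\<lambda>i. A x i - (\<Sum>j<N. complex_of_real (\<xi> j) * rk1 (out w n \<xi> j) x i))"
        by simp
    qed
    have "(\<lambda>N. \<bar>real n - S N\<bar> * l2_norm z) \<longlonglongrightarrow> 0"
    proof -
      have "(\<lambda>N. real n - S N) \<longlonglongrightarrow> 0" using tendsto_diff[OF tendsto_const[of "real n"] Slim] by simp
      hence "(\<lambda>N. \<bar>real n - S N\<bar>) \<longlonglongrightarrow> 0" by (rule tendsto_rabs_zero)
      thus ?thesis by (rule tendsto_mult_left_zero)
    qed
    thus "(\<lambda>N. l2_norm (\<lambda>i. A x i - (\<Sum>j<N. complex_of_real (\<xi> j) * rk1 (out w n \<xi> j) x i))) \<longlonglongrightarrow> 0"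
      using tendsto_cong[OF ev] by simp
  qed
qed

end
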